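(* Let $\varphi$ be an $\mathrm{LTL_{PSL}}$ formula, $D=(I^+,I^-)$ a partition of the set $I$ of its subformulae of the form $s\preceq s'$, and $\varphi_D$ the associated formula. If $\varphi_D$ is $\mathrm{SLTL}$-satisfiable, then the language of the generalised Büchi automaton $\mathcal{A}_{\varphi_D}$ is non-empty.
   Context: Propositional variables $\mathcal{P}$ and standpoint symbols $\mathcal{S}$ (with universal symbol $*$) are countably infinite. SLTL formulae: $\varphi ::= p \mid s \preceq s' \mid \neg\varphi \mid \varphi\wedge\varphi \mid \Diamond_s\varphi \mid \Box_s\varphi \mid X\varphi \mid \varphi\,U\,\varphi$. A model is $M=(\Pi,\lambda)$ with $\Pi\neq\emptyset$ a set of traces $\sigma:\mathbb{N}\to 2^{\mathcal{P}}$, $\lambda:\mathcal{S}\to 2^{\Pi}\setminus\{\emptyset\}$, $\lambda( * )=\Pi$; $M,\sigma,i\models p$ iff $p\in\sigma(i)$; $s\preceq s'$ holds iff $\lambda(s)\subseteq\lambda(s')$; $\Diamond_s\psi$ (resp. $\Box_s\psi$) holds at $\sigma,i$ iff $\psi$ holds at $\sigma',i$ for some (resp. all) $\sigma'\in\lambda(s)$; $X\psi$ holds at $\sigma,i$ iff $\psi$ holds at $\sigma,i+1$; $\psi U\chi$ holds at $\sigma,i$ iff $\chi$ holds at some $\sigma,i'$, $i'\ge i$, and $\psi$ at $\sigma,i''$ for all $i\le i''<i'$. $G\psi:=\neg(\top U\neg\psi)$. Satisfiable: holds at $\sigma,0$ for some $M$, $\sigma\in\Pi$. $\mathrm{LTL_{PSL}}$: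 SLTL formulae with no $X$ or $U$ in the scope of any $\Diamond_s$ or $\Box_s$. $\varphi_D:=\varphi[I^+\mapsto\top,I^-\mapsto\bot]\wedge G\big(\bigwedge_{(s\preceq s')\in I^+}(s\preceq s')\wedge\bigwedge_{(s\preceq s')\in I^-}(\Diamond_s p_{s,s'}\wedge\neg\Diamond_{s'}p_{s,s'})\big)$, where members of $I^+$ (resp. $I^-$) are replaced by $\top$ (resp. $\bot$) and the $p_{s,s'}$ are fresh variables. PSL (propositional standpoint logic) is the temporal-free fragment; a PSL model is $(\Pi,V)$ with $\Pi$ finite nonempty, $V:\mathcal{S}\cup\mathcal{P}\to 2^{\Pi}$, $V(s)\neq\emptyset$ for all $s$, $V( * )=\Pi$; $\pi\models p$ iff $\pi\in V(p)$, $s\preceq s'$ iff $V(s)\subseteq V(s')$, $\Diamond_s\psi$/$\Box_s\psi$ iff $\psi$ holds at some/all $\pi'\in V(s)$. The closure $cl(\varphi_D)$ is the smallest set containing all subformulae of $\varphi_D$, $\top$ and $\bot$, closed under negation (identifying $\neg\neg\psi$ with $\psi$), and such that $\psi U\psi'\in cl(\varphi_D)$ implies $X(\psi U\psi')\in cl(\varphi_D)$. $B\subseteq cl(\varphi_D)$ is maximally consistent if $\top\in B$, $\bot\notin B$; $\psi\in B$ iff $\neg\psi\notin B$ for $\neg\psi\in cl(\varphi_D)$; $\psi_1\wedge\psi_2\in B$ iff $\psi_1,\psi_2\in B$; $\psi_1U\psi_2\in B$ iff $\psi_2\in B$ or $\{\psi_1,X(\psi_1U\psi_2)\}\subseteq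 B$. $B$ is standpoint-consistent if the conjunction of the members of $B$ that are PSL formulae is PSL-satisfiable; $B$ is s-elementary if maximally consistent and standpoint-consistent. $\mathcal{A}_{\varphi_D}=(Q,2^{\mathcal{P}(\varphi_D)},\delta,Q_0,\mathcal{F})$ where $\mathcal{P}(\varphi_D)$ is the set of variables of $\varphi_D$; $Q$ is the set of s-elementary sets; $Q_0=\{B\in Q:\varphi_D\in B\}$; $\mathcal{F}$ contains, for each $\psi_1U\psi_2\in cl(\varphi_D)$, the set $\{B\in Q:\psi_1U\psi_2\notin B\text{ or }\psi_2\in B\}$; $\delta(B,A)=\emptyset$ if $A\neq B\cap\mathcal{P}(\varphi_D)$, and otherwise $\delta(B,A)$ is the set of $B'\in Q$ such that for every $X\psi\in cl(\varphi_D)$, $X\psi\in B$ iff $\psi\in B'$. An infinite word is accepted if it has a run starting in $Q_0$ that visits each set of $\mathcal{F}$ infinitely often. *)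

theory Defs
  imports Main
begin

(* Standpoint symbols: the universal symbol Star plus countably many others. *)
datatype stpt = Star | Sp nat

datatype fm =
    Top
  | Var nat
  | Prec stpt stpt
  | Neg fm
  | And fm fm
  | Dia stpt fm
  | Box stpt fm
  | Next fm
  | Until fm fm

abbreviation Bot :: fm where "Bot \<equiv> Neg Top"

definition Glob :: "fm \<Rightarrow> fm" where
  "Glob \<psi> = Neg (Until Top (Neg \<psi>))"

type_synonym trace = "nat \<Rightarrow> nat set"

definition sltl_model :: "trace set \<Rightarrow> (stpt \<Rightarrow> trace set) \<Rightarrow> bool" where
  "sltl_model Pi lam \<longleftrightarrow> Pi \<noteq> {} \<and> lam Star = Pi \<and> (\<forall>s. lam s \<noteq> {} \<and> lam s \<subseteq> Pi)"

fun sem :: "(stpt \<Rightarrow> trace set) \<Rightarrow> trace \<Rightarrow> nat \<Rightarrow> fm \<Rightarrow> bool" where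
  "sem lam \<sigma> i Top = True"
| "sem lam \<sigma> i (Var p) = (p \<in> \<sigma> i)"
| "sem lam \<sigma> i (Prec s s') = (lam s \<subseteq> lam s')"
| "sem lam \<sigma> i (Neg \<psi>) = (\<not> sem lam \<sigma> i \<psi>)"
| "sem lam \<sigma> i (And \<psi> \<chi>) = (sem lam \<sigma> i \<psi> \<and> sem lam \<sigma> i \<chi>)"
| "sem lam \<sigma> i (Dia s \<psi>) = (\<exists>\<sigma>'\<in>lam s. sem lam \<sigma>' i \<psi>)"
| "sem lam \<sigma> i (Box s \<psi>) = (\<forall>\<sigma>'\<in>lam s. sem lam \<sigma>' i \<psi>)"
| "sem lam \<sigma> i (Next \<psi>) = sem lam \<sigma> (Suc i) \<psi>"
| "sem lam \<sigma> i (Until \<psi> \<chi>) =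
     (\<exists>i'\<ge>i. sem lam \<sigma> i' \<chi> \<and> (\<forall>i''. i \<le> i'' \<and> i'' < i' \<longrightarrow> sem lam \<sigma> i'' \<psi>))"

definition sltl_satisfiable :: "fm \<Rightarrow> bool" where
  "sltl_satisfiable \<phi> \<longleftrightarrow> (\<exists>Pi lam \<sigma>. sltl_model Pi lam \<and> \<sigma> \<in> Pi \<and> sem lam \<sigma> 0 \<phi>)"

(* temporal-free = PSL formula *)
fun temporal_free :: "fm \<Rightarrow> bool" where
  "temporal_free Top = True"
| "temporal_free (Var p) = True"
| "temporal_free (Prec s s') = True"
| "temporal_free (Neg \<psi>) = temporal_free \<psi>"
| "temporal_free (And \<psi> \<chi>) = (temporal_free \<psi> \<and> temporal_free \<chi>)"
| "temporal_free (Dia s \<psi>) = temporal_free \<psi>"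
| "temporal_free (Box s \<psi>) = temporal_free \<psi>"
| "temporal_free (Next \<psi>) = False"
| "temporal_free (Until \<psi> \<chi>) = False"

fun ltl_psl :: "fm \<Rightarrow> bool" where
  "ltl_psl Top = True"
| "ltl_psl (Var p) = True"
| "ltl_psl (Prec s s') = True"
| "ltl_psl (Neg \<psi>) = ltl_psl \<psi>"
| "ltl_psl (And \<psi> \<chi>) = (ltl_psl \<psi> \<and> ltl_psl \<chi>)"
| "ltl_psl (Dia s \<psi>) = temporal_free \<psi>"
| "ltl_psl (Box s \<psi>) = temporal_free \<psi>"
| "ltl_psl (Next \<psi>) = ltl_psl \<psi>"
| "ltl_psl (Until \<psi> \<chi>) = (ltl_psl \<psi> \<and> ltl_psl \<chi>)"

fun subformulas :: "fm \<Rightarrow> fm set" where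
  "subformulas Top = {Top}"
| "subformulas (Var p) = {Var p}"
| "subformulas (Prec s s') = {Prec s s'}"
| "subformulas (Neg \<psi>) = insert (Neg \<psi>) (subformulas \<psi>)"
| "subformulas (And \<psi> \<chi>) = insert (And \<psi> \<chi>) (subformulas \<psi> \<union> subformulas \<chi>)"
| "subformulas (Dia s \<psi>) = insert (Dia s \<psi>) (subformulas \<psi>)"
| "subformulas (Box s \<psi>) = insert (Box s \<psi>) (subformulas \<psi>)"
| "subformulas (Next \<psi>) = insert (Next \<psi>) (subformulas \<psi>)"
| "subformulas (Until \<psi> \<chi>) = insert (Until \<psi> \<chi>) (subformulas \<psi> \<union> subformulas \<chi>)"

fun vars :: "fm \<Rightarrow> nat set" where
  "vars Top = {}"
| "vars (Var p) = {p}"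
| "vars (Prec s s') = {}"
| "vars (Neg \<psi>) = vars \<psi>"
| "vars (And \<psi> \<chi>) = vars \<psi> \<union> vars \<chi>"
| "vars (Dia s \<psi>) = vars \<psi>"
| "vars (Box s \<psi>) = vars \<psi>"
| "vars (Next \<psi>) = vars \<psi>"
| "vars (Until \<psi> \<chi>) = vars \<psi> \<union> vars \<chi>"

definition sharpenings :: "fm \<Rightarrow> (stpt \<times> stpt) set" where
  "sharpenings \<phi> = {(s, s'). Prec s s' \<in> subformulas \<phi>}"

fun repl :: "(stpt \<times> stpt) set \<Rightarrow> (stpt \<times> stpt) set \<Rightarrow> fm \<Rightarrow> fm" where
  "repl Ip Im Top = Top"
| "repl Ip Im (Var p) = Var p"
| "repl Ip Im (Prec s s') =
     (if (s, s') \<in> Ip then Top else if (s, s') \<in> Im then Bot else Prec s s')"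
| "repl Ip Im (Neg \<psi>) = Neg (repl Ip Im \<psi>)"
| "repl Ip Im (And \<psi> \<chi>) = And (repl Ip Im \<psi>) (repl Ip Im \<chi>)"
| "repl Ip Im (Dia s \<psi>) = Dia s (repl Ip Im \<psi>)"
| "repl Ip Im (Box s \<psi>) = Box s (repl Ip Im \<psi>)"
| "repl Ip Im (Next \<psi>) = Next (repl Ip Im \<psi>)"
| "repl Ip Im (Until \<psi> \<chi>) = Until (repl Ip Im \<psi>) (repl Ip Im \<chi>)"

fun conj :: "fm list \<Rightarrow> fm" where
  "conj [] = Top"
| "conj [\<psi>] = \<psi>"
| "conj (\<psi> # \<psi>s) = And \<psi> (conj \<psi>s)"

(* phi_D, for enumerations ip, im of I+ and I- and the fresh-variable map fr *)
definition phiD :: "fm \<Rightarrow> (stpt \<times> stpt) list \<Rightarrow> (stpt \<times> stpt) list \<Rightarrow> (stpt \<Rightarrow> stpt \<Rightarrow> nat) \<Rightarrow> fm" where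
  "phiD \<phi> ip im fr =
     And (repl (set ip) (set im) \<phi>)
         (Glob (conj (map (\<lambda>(s, s'). Prec s s') ip @
                      map (\<lambda>(s, s'). And (Dia s (Var (fr s s'))) (Neg (Dia s' (Var (fr s s'))))) im)))"

fun neg :: "fm \<Rightarrow> fm" where
  "neg (Neg \<psi>) = \<psi>"
| "neg \<psi> = Neg \<psi>"

inductive_set closure :: "fm \<Rightarrow> fm set" for \<phi> :: fm where
  sub: "\<psi> \<in> subformulas \<phi> \<Longrightarrow> \<psi> \<in> closure \<phi>"
| top: "Top \<in> closure \<phi>"
| bot: "Bot \<in> closure \<phi>"
| negc: "\<psi> \<in> closure \<phi> \<Longrightarrow> neg \<psi> \<in> closure \<phi>"
| untl: "Until \<psi> \<chi> \<in> closure \<phi> \<Longrightarrow> Next (Until \<psi> \<chi>) \<in> closure \<phi>"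

definition max_consistent :: "fm \<Rightarrow> fm set \<Rightarrow> bool" where
  "max_consistent \<phi> B \<longleftrightarrow> B \<subseteq> closure \<phi> \<and> Top \<in> B \<and> Bot \<notin> B
     \<and> (\<forall>\<psi>\<in>closure \<phi>. \<psi> \<in> B \<longleftrightarrow> neg \<psi> \<notin> B)
     \<and> (\<forall>\<psi> \<chi>. And \<psi> \<chi> \<in> closure \<phi> \<longrightarrow> (And \<psi> \<chi> \<in> B \<longleftrightarrow> \<psi> \<in> B \<and> \<chi> \<in> B))
     \<and> (\<forall>\<psi> \<chi>. Until \<psi> \<chi> \<in> closure \<phi> \<longrightarrow>
          (Until \<psi> \<chi> \<in> B \<longleftrightarrow> \<chi> \<in> B \<or> (\<psi> \<in> B \<and> Next (Until \<psi> \<chi>) \<in> B)))"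

definition psl_model :: "nat set \<Rightarrow> (stpt \<Rightarrow> nat set) \<Rightarrow> (nat \<Rightarrow> nat set) \<Rightarrow> bool" where
  "psl_model W Vs Vp \<longleftrightarrow> finite W \<and> W \<noteq> {} \<and> Vs Star = W
     \<and> (\<forall>s. Vs s \<noteq> {} \<and> Vs s \<subseteq> W) \<and> (\<forall>p. Vp p \<subseteq> W)"

fun psl_sem :: "(stpt \<Rightarrow> nat set) \<Rightarrow> (nat \<Rightarrow> nat set) \<Rightarrow> nat \<Rightarrow> fm \<Rightarrow> bool" where
  "psl_sem Vs Vp w Top = True"
| "psl_sem Vs Vp w (Var p) = (w \<in> Vp p)"
| "psl_sem Vs Vp w (Prec s s') = (Vs s \<subseteq> Vs s')"
| "psl_sem Vs Vp w (Neg \<psi>) = (\<not> psl_sem Vs Vp w \<psi>)"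
| "psl_sem Vs Vp w (And \<psi> \<chi>) = (psl_sem Vs Vp w \<psi> \<and> psl_sem Vs Vp w \<chi>)"
| "psl_sem Vs Vp w (Dia s \<psi>) = (\<exists>w'\<in>Vs s. psl_sem Vs Vp w' \<psi>)"
| "psl_sem Vs Vp w (Box s \<psi>) = (\<forall>w'\<in>Vs s. psl_sem Vs Vp w' \<psi>)"
| "psl_sem Vs Vp w (Next \<psi>) = False"  (* not a PSL formula; never used *)
| "psl_sem Vs Vp w (Until \<psi> \<chi>) = False"  (* not a PSL formula; never used *)

definition standpoint_consistent :: "fm set \<Rightarrow> bool" where
  "standpoint_consistent B \<longleftrightarrow> (\<exists>W Vs Vp w. psl_model W Vs Vp \<and> w \<in> W \<and>
      (\<forall>\<psi>\<in>B. temporal_free \<psi> \<longrightarrow> psl_sem Vs Vp w \<psi>))"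

definition s_elementary :: "fm \<Rightarrow> fm set \<Rightarrow> bool" where
  "s_elementary \<phi> B \<longleftrightarrow> max_consistent \<phi> B \<and> standpoint_consistent B"

definition aut_Q :: "fm \<Rightarrow> fm set set" where
  "aut_Q \<phi> = {B. s_elementary \<phi> B}"

definition aut_Q0 :: "fm \<Rightarrow> fm set set" where
  "aut_Q0 \<phi> = {B \<in> aut_Q \<phi>. \<phi> \<in> B}"

definition aut_delta :: "fm \<Rightarrow> fm set \<Rightarrow> nat set \<Rightarrow> fm set set" where
  "aut_delta \<phi> B A =
     (if A \<noteq> {p \<in> vars \<phi>. Var p \<in> B} then {}
      else {B' \<in> aut_Q \<phi>. \<forall>\<psi>. Next \<psi> \<in> closure \<phi> \<longrightarrow> (Next \<psi> \<in> B \<longleftrightarrow> \<psi> \<in> B')})"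

definition aut_F :: "fm \<Rightarrow> fm set set set" where
  "aut_F \<phi> = {{B \<in> aut_Q \<phi>. Until \<psi> \<chi> \<notin> B \<or> \<chi> \<in> B} | \<psi> \<chi>. Until \<psi> \<chi> \<in> closure \<phi>}"

definition accepts :: "fm \<Rightarrow> (nat \<Rightarrow> nat set) \<Rightarrow> bool" where
  "accepts \<phi> w \<longleftrightarrow> (\<exists>r :: nat \<Rightarrow> fm set. r 0 \<in> aut_Q0 \<phi>
      \<and> (\<forall>i. r (Suc i) \<in> aut_delta \<phi> (r i) (w i))
      \<and> (\<forall>F\<in>aut_F \<phi>. infinite {i. r i \<in> F}))"

definition language_nonempty :: "fm \<Rightarrow> bool" where
  "language_nonempty \<phi> \<longleftrightarrow> (\<exists>w. (\<forall>i. w i \<subseteq> vars \<phi>) \<and> accepts \<phi> w)"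

end

theory Submission
  imports Defs
begin

lemma sub_refl: "\<psi> \<in> subformulas \<psi>"
  by (cases \<psi>) auto

lemma sub_trans: "x \<in> subformulas y \<Longrightarrow> subformulas x \<subseteq> subformulas y"
  by (induction y) auto

lemma sub_neg: "subformulas (neg \<psi>) \<subseteq> insert (Neg \<psi>) (subformulas \<psi>)"
  by (cases \<psi>) auto

lemma closure_sub: "\<psi> \<in> closure \<phi> \<Longrightarrow> subformulas \<psi> \<subseteq> closure \<phi>"
proof (induction rule: closure.induct)
  case (sub \<psi>)
  then show ?case using sub_trans closure.sub by blast
next
  case top
  then show ?case by (auto intro: closure.top)
next
  case bot
  then show ?case by (auto intro: closure.top closure.bot)
next
  case (negc \<psi>)
  show ?case
  proof (cases "\<exists>x. \<psi> = Neg x")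
    case True
    then obtain x where x: "\<psi> = Neg x" by blast
    then have "subformulas x \<subseteq> subformulas \<psi>" by auto
    then show ?thesis using negc.IH x by simp
  next
    case False
    then have "neg \<psi> = Neg \<psi>" by (cases \<psi>) auto
    then show ?thesis using negc.IH closure.negc[OF negc.hyps] by simp
  qed
next
  case (untl \<psi> \<chi>)
  then show ?case using closure.untl[OF untl.hyps] by auto
qed

definition atom :: "fm \<Rightarrow> bool" where
  "atom x \<longleftrightarrow> (\<exists>s s'. x = Prec s s') \<or> (\<exists>p. x = Var p)"

lemma closure_atoms: "\<psi> \<in> closure \<phi> \<Longrightarrow> x \<in> subformulas \<psi> \<Longrightarrow> atom x \<Longrightarrow> x \<in> subformulas \<phi>"
proof (induction arbitrary: x rule: closure.induct)
  case (sub \<psi>)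
  then show ?case using sub_trans by blast
next
  case top
  then show ?case by (auto simp: atom_def)
next
  case bot
  then show ?case by (auto simp: atom_def)
next
  case (negc \<psi>)
  then show ?case using sub_neg[of \<psi>] by (auto simp: atom_def)
next
  case (untl \<psi> \<chi>)
  then show ?case by (auto simp: atom_def)
qed

lemma vars_sub: "p \<in> vars \<psi> \<longleftrightarrow> Var p \<in> subformulas \<psi>"
  by (induction \<psi>) auto

lemma sem_neg: "sem lam \<sigma> i (neg \<psi>) = (\<not> sem lam \<sigma> i \<psi>)"
  by (cases \<psi>) auto

lemma sem_until: "sem lam \<sigma> i (Until a b) \<longleftrightarrow>
   sem lam \<sigma> i b \<or> (sem lam \<sigma> i a \<and> sem lam \<sigma> (Suc i) (Until a b))"
proof
  assume "sem lam \<sigma> i (Until a b)"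
  then obtain i' where i': "i' \<ge> i" "sem lam \<sigma> i' b" "\<forall>i''. i \<le> i'' \<and> i'' < i' \<longrightarrow> sem lam \<sigma> i'' a"
    by auto
  show "sem lam \<sigma> i b \<or> (sem lam \<sigma> i a \<and> sem lam \<sigma> (Suc i) (Until a b))"
  proof (cases "i' = i")
    case True then show ?thesis using i' by auto
  next
    case False
    then have "sem lam \<sigma> i a" using i' by auto
    moreover have "sem lam \<sigma> (Suc i) (Until a b)" using i' False
      by (auto intro!: exI[of _ i'])
    ultimately show ?thesis by auto
  qed
next
  assume "sem lam \<sigma> i b \<or> (sem lam \<sigma> i a \<and> sem lam \<sigma> (Suc i) (Until a b))"
  then show "sem lam \<sigma> i (Until a b)"
  proof
    assume "sem lam \<sigma> i b" then show ?thesis by auto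
  next
    assume h: "sem lam \<sigma> i a \<and> sem lam \<sigma> (Suc i) (Until a b)"
 then obtain i' where i': "i' \<ge> Suc i" "sem lam \<sigma> i' b" "\<forall>i''. Suc i \<le> i'' \<and> i'' < i' \<longrightarrow> sem lam \<sigma> i'' a"
      by auto
    have "\<forall>i''. i \<le> i'' \<and> i'' < i' \<longrightarrow> sem lam \<sigma> i'' a"
      using h i'(3) by (metis le_antisym not_less_eq_eq)
    then show ?thesis using i' by (auto intro!: exI[of _ i'])
  qed
qed

lemma sem_conj: "sem lam \<sigma> i (conj xs) \<longleftrightarrow> (\<forall>x\<in>set xs. sem lam \<sigma> i x)"
  by (induction xs rule: conj.induct) auto

lemma sub_conj: "y \<in> subformulas (conj xs) \<Longrightarrow> atom y \<Longrightarrow> \<exists>x\<in>set xs. y \<in> subformulas x"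
  by (induction xs rule: conj.induct) (auto simp: atom_def)

lemma sub_repl: "Prec s s' \<in> subformulas (repl Ip Im \<psi>) \<Longrightarrow>
   Prec s s' \<in> subformulas \<psi> \<and> (s, s') \<notin> Ip \<and> (s, s') \<notin> Im"
  by (induction \<psi>) (auto split: if_splits)

lemma prec_closure:
  assumes "set ip \<union> set im = sharpenings \<phi>" "Prec s s' \<in> closure (phiD \<phi> ip im fr)"
  shows "(s, s') \<in> set ip"
proof -
  have "Prec s s' \<in> subformulas (phiD \<phi> ip im fr)"
    using closure_atoms[OF assms(2) sub_refl] by (simp add: atom_def)
  then have "Prec s s' \<in> subformulas (repl (set ip) (set im) \<phi>) \<or>
     Prec s s' \<in> subformulas (conj (map (\<lambda>(s, s'). Prec s s') ip @
                      map (\<lambda>(s, s'). And (Dia s (Var (fr s s'))) (Neg (Dia s' (Var (fr s s'))))) im))"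
    by (simp add: phiD_def Glob_def)
  then show ?thesis
  proof
    assume "Prec s s' \<in> subformulas (repl (set ip) (set im) \<phi>)"
    from sub_repl[OF this] assms(1) show ?thesis by (auto simp: sharpenings_def)
  next
    assume "Prec s s' \<in> subformulas (conj (map (\<lambda>(s, s'). Prec s s') ip @
                      map (\<lambda>(s, s'). And (Dia s (Var (fr s s'))) (Neg (Dia s' (Var (fr s s'))))) im))"
    from sub_conj[OF this] show ?thesis by (auto simp: atom_def)
  qed
qed

lemma finite_vars: "finite (vars \<psi>)"
  by (induction \<psi>) auto

lemma psl_equiv:
  assumes inj: "inj_on c ((\<lambda>\<sigma>. \<sigma> i \<inter> V) ` Pi)" and sub: "\<forall>s. lam s \<subseteq> Pi"
  shows "temporal_free \<psi> \<Longrightarrow> vars \<psi> \<subseteq> V \<Longrightarrow>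
    (\<forall>s s'. Prec s s' \<in> subformulas \<psi> \<longrightarrow> lam s \<subseteq> lam s') \<Longrightarrow> \<sigma> \<in> Pi \<Longrightarrow>
    psl_sem (\<lambda>s. (\<lambda>\<sigma>. c (\<sigma> i \<inter> V)) ` lam s) (\<lambda>p. {c (\<sigma> i \<inter> V) | \<sigma>. \<sigma> \<in> Pi \<and> p \<in> \<sigma> i})
       (c (\<sigma> i \<inter> V)) \<psi> = sem lam \<sigma> i \<psi>"
proof (induction \<psi> arbitrary: \<sigma>)
  case (Var p)
  have "(\<exists>\<sigma>'. c (\<sigma> i \<inter> V) = c (\<sigma>' i \<inter> V) \<and> \<sigma>' \<in> Pi \<and> p \<in> \<sigma>' i) \<longleftrightarrow> p \<in> \<sigma> i"
  proof
    assume "\<exists>\<sigma>'. c (\<sigma> i \<inter> V) = c (\<sigma>' i \<inter> V) \<and> \<sigma>' \<in> Pi \<and> p \<in> \<sigma>' i"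
    then obtain \<sigma>' where h: "c (\<sigma> i \<inter> V) = c (\<sigma>' i \<inter> V)" "\<sigma>' \<in> Pi" "p \<in> \<sigma>' i" by blast
    then have "\<sigma> i \<inter> V = \<sigma>' i \<inter> V" using inj Var.prems(4) by (auto dest: inj_onD)
    then show "p \<in> \<sigma> i" using h Var.prems(2) by auto
  next
    assume "p \<in> \<sigma> i" then show "\<exists>\<sigma>'. c (\<sigma> i \<inter> V) = c (\<sigma>' i \<inter> V) \<and> \<sigma>' \<in> Pi \<and> p \<in> \<sigma>' i"
      using Var.prems(4) by blast
  qed
  then show ?case by simp
next
  case (Prec s s')
  then show ?case by auto
next
  case (Dia s \<psi>)
  have "\<And>\<sigma>'. \<sigma>' \<in> lam s \<Longrightarrow> psl_sem (\<lambda>s. (\<lambda>\<sigma>. c (\<sigma> i \<inter> V)) ` lam s) (\<lambda>p. {c (\<sigma> i \<inter> V) | \<sigma>. \<sigma> \<in> Pi \<and> p \<in> \<sigma> i})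
       (c (\<sigma>' i \<inter> V)) \<psi> = sem lam \<sigma>' i \<psi>"
    by (rule Dia.IH) (use Dia.prems sub in auto)
  then show ?case by auto
next
  case (Box s \<psi>)
  have "\<And>\<sigma>'. \<sigma>' \<in> lam s \<Longrightarrow> psl_sem (\<lambda>s. (\<lambda>\<sigma>. c (\<sigma> i \<inter> V)) ` lam s) (\<lambda>p. {c (\<sigma> i \<inter> V) | \<sigma>. \<sigma> \<in> Pi \<and> p \<in> \<sigma> i})
       (c (\<sigma>' i \<inter> V)) \<psi> = sem lam \<sigma>' i \<psi>"
    by (rule Box.IH) (use Box.prems sub in auto)
  then show ?case by auto
qed auto

theorem lemma4:
  fixes \<phi> :: fm and ip im :: "(stpt \<times> stpt) list" and fr :: "stpt \<Rightarrow> stpt \<Rightarrow> nat"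
  assumes "ltl_psl \<phi>"
    and "set ip \<union> set im = sharpenings \<phi>" and "set ip \<inter> set im = {}"
    and "distinct ip" and "distinct im"
    and "inj_on (\<lambda>(s, s'). fr s s') (set im)"
    and "\<forall>(s, s')\<in>set im. fr s s' \<notin> vars \<phi>"
    and "sltl_satisfiable (phiD \<phi> ip im fr)"
  shows "language_nonempty (phiD \<phi> ip im fr)"
proof -
  define \<Phi> where "\<Phi> = phiD \<phi> ip im fr"
  obtain Pi lam \<sigma> where M: "sltl_model Pi lam" "\<sigma> \<in> Pi" "sem lam \<sigma> 0 \<Phi>"
    using assms(8) unfolding sltl_satisfiable_def \<Phi>_def by blast
  have lsub: "\<forall>s. lam s \<subseteq> Pi" and lne: "\<forall>s. lam s \<noteq> {}" and lstar: "lam Star = Pi"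
    using M(1) by (auto simp: sltl_model_def)
  have glob: "sem lam \<sigma> j (conj (map (\<lambda>(s, s'). Prec s s') ip @
                      map (\<lambda>(s, s'). And (Dia s (Var (fr s s'))) (Neg (Dia s' (Var (fr s s'))))) im))" for j
    using M(3) unfolding \<Phi>_def phiD_def Glob_def by auto
  have precs: "lam s \<subseteq> lam s'" if "Prec s s' \<in> closure \<Phi>" for s s'
  proof -
    have "(s, s') \<in> set ip" using prec_closure[OF assms(2)] that \<Phi>_def by blast
    then show ?thesis using glob[of 0] unfolding sem_conj by force
  qed
  define V where "V = vars \<Phi>"
  have finV: "finite V" using finite_vars V_def by simp
  define r where "r = (\<lambda>i. {\<psi> \<in> closure \<Phi>. sem lam \<sigma> i \<psi>})"
  define w where "w = (\<lambda>i. {p \<in> vars \<Phi>. p \<in> \<sigma> i})"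
  have cl_sub: "\<And>\<psi> x. \<psi> \<in> closure \<Phi> \<Longrightarrow> x \<in> subformulas \<psi> \<Longrightarrow> x \<in> closure \<Phi>"
    using closure_sub by blast
  have mc: "max_consistent \<Phi> (r i)" for i
    unfolding max_consistent_def r_def
  proof (intro conjI allI impI ballI)
    show "Bot \<notin> {\<psi> \<in> closure \<Phi>. sem lam \<sigma> i \<psi>}" by simp
    show "Top \<in> {\<psi> \<in> closure \<Phi>. sem lam \<sigma> i \<psi>}" by (simp add: closure.top)
  next
    fix \<psi> assume "\<psi> \<in> closure \<Phi>"
    then show "(\<psi> \<in> {\<psi> \<in> closure \<Phi>. sem lam \<sigma> i \<psi>}) = (neg \<psi> \<notin> {\<psi> \<in> closure \<Phi>. sem lam \<sigma> i \<psi>})"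
      using closure.negc sem_neg by auto
  next
    fix a b assume h: "And a b \<in> closure \<Phi>"
    then have "a \<in> closure \<Phi>" "b \<in> closure \<Phi>" using cl_sub[OF h] sub_refl by auto
    then show "(And a b \<in> {\<psi> \<in> closure \<Phi>. sem lam \<sigma> i \<psi>}) =
         (a \<in> {\<psi> \<in> closure \<Phi>. sem lam \<sigma> i \<psi>} \<and> b \<in> {\<psi> \<in> closure \<Phi>. sem lam \<sigma> i \<psi>})"
      using h by auto
  next
    fix a b assume h: "Until a b \<in> closure \<Phi>"
    then have "a \<in> closure \<Phi>" "b \<in> closure \<Phi>" "Next (Until a b) \<in> closure \<Phi>"
      using cl_sub[OF h] closure.untl[OF h] sub_refl by auto
    then show "(Until a b \<in> {\<psi> \<in> closure \<Phi>. sem lam \<sigma> i \<psi>}) =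
         (b \<in> {\<psi> \<in> closure \<Phi>. sem lam \<sigma> i \<psi>} \<or>
          a \<in> {\<psi> \<in> closure \<Phi>. sem lam \<sigma> i \<psi>} \<and> Next (Until a b) \<in> {\<psi> \<in> closure \<Phi>. sem lam \<sigma> i \<psi>})"
      using h sem_until[of lam \<sigma> i a b] by auto
  qed auto
  have sc: "standpoint_consistent (r i)" for i
  proof -
    define T where "T = (\<lambda>\<sigma>. \<sigma> i \<inter> V) ` Pi"
    have "T \<subseteq> Pow V" unfolding T_def by auto
    then have finT: "finite T" using finV finite_subset by blast
    obtain c :: "nat set \<Rightarrow> nat" where inj: "inj_on c T"
      using finite_imp_inj_to_nat_seg[OF finT] by blast
    define Vs where "Vs = (\<lambda>s. (\<lambda>\<sigma>. c (\<sigma> i \<inter> V)) ` lam s)"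
    define Vp where "Vp = (\<lambda>p. {c (\<sigma> i \<inter> V) | \<sigma>. \<sigma> \<in> Pi \<and> p \<in> \<sigma> i})"
    have pm: "psl_model (c ` T) Vs Vp"
    proof -
      have "finite (c ` T)" using finT by simp
      moreover have "Vs Star = c ` T" unfolding Vs_def T_def lstar by (simp add: image_image)
      moreover have "\<forall>s. Vs s \<noteq> {} \<and> Vs s \<subseteq> c ` T"
        unfolding Vs_def T_def using lsub lne by blast
      moreover have "\<forall>p. Vp p \<subseteq> c ` T" unfolding Vp_def T_def by blast
      moreover have "c ` T \<noteq> {}" using M(2) T_def by blast
      ultimately show ?thesis unfolding psl_model_def by blast
    qed
    have "c (\<sigma> i \<inter> V) \<in> c ` T" using M(2) T_def by auto
    moreover have "\<forall>\<psi>\<in>r i. temporal_free \<psi> \<longrightarrow> psl_sem Vs Vp (c (\<sigma> i \<inter> V)) \<psi>"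
    proof (intro ballI impI)
      fix \<psi> assume h: "\<psi> \<in> r i" "temporal_free \<psi>"
      have cl: "\<psi> \<in> closure \<Phi>" and sm: "sem lam \<sigma> i \<psi>" using h r_def by auto
      have "vars \<psi> \<subseteq> V"
      proof
        fix p assume "p \<in> vars \<psi>"
        then have "Var p \<in> subformulas \<psi>" using vars_sub by auto
        then have "Var p \<in> subformulas \<Phi>" using closure_atoms[OF cl] by (auto simp: atom_def)
        then show "p \<in> V" using vars_sub V_def by auto
      qed
      moreover have "\<forall>s s'. Prec s s' \<in> subformulas \<psi> \<longrightarrow> lam s \<subseteq> lam s'"
        using precs cl_sub[OF cl] by blast
      ultimately show "psl_sem Vs Vp (c (\<sigma> i \<inter> V)) \<psi>"
        using psl_equiv[OF inj[unfolded T_def] lsub h(2) _ _ M(2)] sm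
        unfolding Vs_def Vp_def by blast
    qed
    ultimately show ?thesis using pm unfolding standpoint_consistent_def by blast
  qed
  have rQ: "r i \<in> aut_Q \<Phi>" for i
    using mc sc by (simp add: aut_Q_def s_elementary_def)
  have r0: "r 0 \<in> aut_Q0 \<Phi>"
    using rQ M(3) by (simp add: aut_Q0_def r_def closure.sub sub_refl)
  have step: "r (Suc i) \<in> aut_delta \<Phi> (r i) (w i)" for i
  proof -
    have "w i = {p \<in> vars \<Phi>. Var p \<in> r i}"
      unfolding w_def r_def using vars_sub closure.sub by auto
    moreover have "\<forall>\<psi>. Next \<psi> \<in> closure \<Phi> \<longrightarrow> (Next \<psi> \<in> r i \<longleftrightarrow> \<psi> \<in> r (Suc i))"
    proof (intro allI impI)
      fix \<psi> assume h: "Next \<psi> \<in> closure \<Phi>"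
      then have "\<psi> \<in> closure \<Phi>" using cl_sub[OF h] sub_refl by auto
      then show "Next \<psi> \<in> r i \<longleftrightarrow> \<psi> \<in> r (Suc i)" using h r_def by auto
    qed
    ultimately show ?thesis using rQ unfolding aut_delta_def by auto
  qed
  have acc: "infinite {i. r i \<in> F}" if hF: "F \<in> aut_F \<Phi>" for F
  proof -
    obtain a b where F: "F = {B \<in> aut_Q \<Phi>. Until a b \<notin> B \<or> b \<in> B}" and u: "Until a b \<in> closure \<Phi>"
      using hF unfolding aut_F_def by blast
    have bcl: "b \<in> closure \<Phi>" using cl_sub[OF u] sub_refl by auto
    show ?thesis
    proof
      assume fin: "finite {i. r i \<in> F}"
      obtain N where N: "\<forall>i\<ge>N. r i \<notin> F"
      proof -
        obtain N where "\<forall>i\<in>{i. r i \<in> F}. i < N" using fin finite_nat_set_iff_bounded by blast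
        then show ?thesis using that by (meson leD mem_Collect_eq)
      qed
      have all: "sem lam \<sigma> i (Until a b) \<and> \<not> sem lam \<sigma> i b" if "i \<ge> N" for i
      proof -
        have "r i \<notin> F" using N that by blast
        then have "\<not> (Until a b \<notin> r i \<or> b \<in> r i)" using rQ[of i] unfolding F by blast
        then show ?thesis using bcl unfolding r_def by blast
      qed
      then obtain i' where "i' \<ge> N" "sem lam \<sigma> i' b" using all[of N] by auto
      then show False using all[of i'] by auto
    qed
  qed
  have "(\<forall>i. w i \<subseteq> vars \<Phi>) \<and> accepts \<Phi> w"
    unfolding accepts_def using r0 step acc w_def by blast
  then show ?thesis unfolding language_nonempty_def \<Phi>_def by blast
qed

end
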